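(* Let $R$ be a (von Neumann) regular $K$-algebra, $J$ an ideal of $R$, and $\pi : R \to R/J$ the quotient map. If $A$ is a finite dimensional subalgebra of $R/J$, then $R$ has a finite dimensional subalgebra $T$ such that $\pi$ restricts to an algebra isomorphism of $T$ onto $A$. In particular, if $R/J$ is finite dimensional, there is a subalgebra $T$ of $R$ with $R = T \oplus J$ as $K$-vector spaces.
   Context: $K$ is a field. All algebras are associative but not necessarily unital $K$-algebras; ideals are two-sided ring ideals that are also $K$-subspaces. A ring $R$ is (von Neumann) regular if for every $x\in R$ there is $y \in R$ with $xyx = x$. *)

theory Defs
  imports Complex_Main
begin

text \<open>An associative, not necessarily unital K-algebra structure on a type of class ring
  (HOL's class ring is associative and non-unital), given by a scalar multiplication.\<close>
definition K_algebra :: "('k::field \<Rightarrow> 'r::ring \<Rightarrow> 'r) \<Rightarrow> bool" where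
  "K_algebra scale \<longleftrightarrow> vector_space scale \<and>
     (\<forall>c x y. scale c (x * y) = scale c x * y \<and> scale c (x * y) = x * scale c y)"

definition vn_regular :: "'r::ring itself \<Rightarrow> bool" where
  "vn_regular _ \<longleftrightarrow> (\<forall>x::'r. \<exists>y. x * y * x = x)"

definition alg_ideal :: "('k::field \<Rightarrow> 'r::ring \<Rightarrow> 'r) \<Rightarrow> 'r set \<Rightarrow> bool" where
  "alg_ideal scale J \<longleftrightarrow> module.subspace scale J \<and>
     (\<forall>x\<in>J. \<forall>r. r * x \<in> J \<and> x * r \<in> J)"

definition subalgebra :: "('k::field \<Rightarrow> 'r::ring \<Rightarrow> 'r) \<Rightarrow> 'r set \<Rightarrow> bool" where
  "subalgebra scale T \<longleftrightarrow> module.subspace scale T \<and> (\<forall>x\<in>T. \<forall>y\<in>T. x * y \<in> T)"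

definition fin_dim :: "('k::field \<Rightarrow> 'r::ring \<Rightarrow> 'r) \<Rightarrow> 'r set \<Rightarrow> bool" where
  "fin_dim scale A \<longleftrightarrow> (\<exists>F. finite F \<and> F \<subseteq> A \<and> module.span scale F = A)"

definition alg_hom :: "('k::field \<Rightarrow> 'r::ring \<Rightarrow> 'r) \<Rightarrow> ('k \<Rightarrow> 's::ring \<Rightarrow> 's) \<Rightarrow> ('r \<Rightarrow> 's) \<Rightarrow> bool" where
  "alg_hom s1 s2 f \<longleftrightarrow> Vector_Spaces.linear s1 s2 f \<and> (\<forall>x y. f (x * y) = f x * f y)"

end

theory Submission
  imports Defs
begin

inductive_set rid :: "('k::field \<Rightarrow> 'r::ring \<Rightarrow> 'r) \<Rightarrow> 'r set \<Rightarrow> 'r set" for sc G where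
  gen: "g \<in> G \<Longrightarrow> g \<in> rid sc G"
| zero: "0 \<in> rid sc G"
| add: "y \<in> rid sc G \<Longrightarrow> w \<in> rid sc G \<Longrightarrow> y + w \<in> rid sc G"
| diff: "y \<in> rid sc G \<Longrightarrow> w \<in> rid sc G \<Longrightarrow> y - w \<in> rid sc G"
| mult: "y \<in> rid sc G \<Longrightarrow> y * r \<in> rid sc G"
| scl: "y \<in> rid sc G \<Longrightarrow> sc c y \<in> rid sc G"

lemma rid_mono: assumes "G \<subseteq> H" "y \<in> rid sc G" shows "y \<in> rid sc H"
  using assms(2) by induction (use assms(1) in \<open>auto intro: rid.intros\<close>)

lemma rid_sub:
  assumes "K_algebra sc" "alg_ideal sc J" "G \<subseteq> J" "y \<in> rid sc G" shows "y \<in> J"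
proof -
  interpret vector_space sc using assms(1) unfolding K_algebra_def by blast
  have S: "subspace J" and I: "\<forall>x\<in>J. \<forall>r. r * x \<in> J \<and> x * r \<in> J"
    using assms(2) unfolding alg_ideal_def by auto
  show ?thesis using assms(4)
    by induction (use assms(3) S I in \<open>auto intro: subspace_0 subspace_add subspace_diff subspace_scale\<close>)
qed

lemma rid_unit:
  assumes "K_algebra sc" "\<forall>g\<in>G. f * g = g" "y \<in> rid sc G" shows "f * y = y"
  using assms(3)
proof (induction rule: rid.induct)
  case (mult y r) then show ?case by (metis mult.assoc)
next
  case (scl y c) then show ?case using assms(1) unfolding K_algebra_def by metis
qed (use assms(2) in \<open>auto simp: distrib_left right_diff_distrib\<close>)

lemma rid_left:
  assumes "K_algebra sc" "\<forall>g\<in>G. x * g \<in> rid sc G" "y \<in> rid sc G" shows "x * y \<in> rid sc G"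
  using assms(3)
proof (induction rule: rid.induct)
  case (mult y r) then show ?case by (metis mult.assoc rid.mult)
next
  case (scl y c) then show ?case using assms(1) unfolding K_algebra_def by (metis rid.scl)
qed (use assms(2) in \<open>auto simp: distrib_left right_diff_distrib intro: rid.intros\<close>)

lemma rid_idem:
  assumes "vn_regular TYPE('r::ring)" "finite G"
  shows "\<exists>f::'r. f * f = f \<and> f \<in> rid sc G \<and> (\<forall>g\<in>G. f * g = g)"
  using assms(2)
proof (induction rule: finite_induct)
  case empty then show ?case by (intro exI[of _ 0]) (auto intro: rid.zero)
next
  case (insert a G)
  then obtain e where ee: "e * e = e" and eR: "e \<in> rid sc G" and eg: "\<forall>g\<in>G. e * g = g" by blast
  define h where "h = a - e * a"
  obtain z where hz: "h * z * h = h" using assms(1) unfolding vn_regular_def by blast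
  define k where "k = h * z"
  define k' where "k' = k - k * e"
  define f where "f = e + k'"
  have eh: "e * h = 0" unfolding h_def by (simp add: right_diff_distrib ee mult.assoc[symmetric])
  have kk: "k * k = k" unfolding k_def by (metis hz mult.assoc)
  have ek: "e * k = 0" unfolding k_def by (simp add: eh mult.assoc[symmetric])
  have k'e: "k' * e = 0" unfolding k'_def by (simp add: left_diff_distrib mult.assoc ee)
  have ek': "e * k' = 0" unfolding k'_def by (simp add: right_diff_distrib mult.assoc[symmetric] ek)
  have k'k': "k' * k' = k'"
  proof -
    have "k' * k' = k * k - k * k * e - k * e * k + k * e * k * e"
      unfolding k'_def by (simp add: algebra_simps)
    also have "\<dots> = k'" unfolding k'_def by (simp add: kk mult.assoc ek)
    finally show ?thesis .
  qed
  have ff: "f * f = f" unfolding f_def by (simp add: algebra_simps ee ek' k'e k'k')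
  have fe: "f * e = e" unfolding f_def by (simp add: algebra_simps ee k'e)
  have fh: "f * h = h"
  proof -
    have "f * h = k * h - k * e * h" unfolding f_def k'_def by (simp add: algebra_simps eh)
    also have "\<dots> = h" by (simp add: mult.assoc eh) (simp add: k_def hz)
    finally show ?thesis .
  qed
  have fa: "f * a = a"
  proof -
    have "a = h + e * a" unfolding h_def by simp
    then have "f * a = f * h + f * (e * a)" by (metis distrib_left)
    also have "\<dots> = a" using fh fe by (simp add: mult.assoc[symmetric]) (simp add: h_def)
    finally show ?thesis .
  qed
  have fg: "\<forall>g\<in>insert a G. f * g = g"
  proof
    fix g assume "g \<in> insert a G"
    then show "f * g = g"
    proof
      assume "g = a" then show ?thesis using fa by simp
    next
      assume "g \<in> G" then have "g = e * g" using eg by simp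
      then show ?thesis using fe by (metis mult.assoc)
    qed
  qed
  have eR': "e \<in> rid sc (insert a G)" using rid_mono[OF _ eR] by blast
  have aR: "a \<in> rid sc (insert a G)" by (auto intro: rid.gen)
  have hR: "h \<in> rid sc (insert a G)" unfolding h_def by (intro rid.diff aR rid.mult eR')
  have kR: "k' \<in> rid sc (insert a G)" unfolding k'_def k_def by (intro rid.diff rid.mult hR)
  have "f \<in> rid sc (insert a G)" unfolding f_def by (intro rid.add eR' kR)
  with ff fg show ?case by blast
qed

lemma part1:
  fixes sR :: "'k::field \<Rightarrow> 'r::ring \<Rightarrow> 'r"
    and sQ :: "'k \<Rightarrow> 'q::ring \<Rightarrow> 'q"
    and \<pi> :: "'r \<Rightarrow> 'q"
    and J :: "'r set"
  assumes KR: "K_algebra sR" and KQ: "K_algebra sQ"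
    and reg: "vn_regular TYPE('r)"
    and idl: "alg_ideal sR J"
    and hom: "alg_hom sR sQ \<pi>" and su: "surj \<pi>" and ker: "{x. \<pi> x = 0} = J"
    and Asub: "subalgebra sQ A" and Afd: "fin_dim sQ A"
  shows "\<exists>T. subalgebra sR T \<and> fin_dim sR T \<and> bij_betw \<pi> T A"
proof -
  interpret R: vector_space sR using KR unfolding K_algebra_def by blast
  interpret Q: vector_space sQ using KQ unfolding K_algebra_def by blast
  interpret P: vector_space_pair sR sQ by unfold_locales
  have sl: "\<And>c x y. sR c x * y = sR c (x * y)" and sr: "\<And>c x y. x * sR c y = sR c (x * y)"
    using KR unfolding K_algebra_def by metis+
  have sqr: "\<And>c x y. x * sQ c y = sQ c (x * y)" and sql: "\<And>c x y. sQ c x * y = sQ c (x * y)"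
    using KQ unfolding K_algebra_def by metis+
  have linp: "Vector_Spaces.linear sR sQ \<pi>" and pm: "\<And>x y. \<pi> (x * y) = \<pi> x * \<pi> y"
    using hom unfolding alg_hom_def by auto
  interpret Lp: Vector_Spaces.linear sR sQ \<pi> by (rule linp)
  obtain lf where linl: "Vector_Spaces.linear sQ sR lf" and pl0: "\<pi> \<circ> lf = id"
    using P.linear_surjective_right_inverse[OF linp su] by blast
  have pl: "\<And>q. \<pi> (lf q) = q" using pl0 by (metis comp_apply id_apply)
  interpret Ll: Vector_Spaces.linear sQ sR lf by (rule linl)
  have inJ: "\<And>x. x \<in> J \<longleftrightarrow> \<pi> x = 0" using ker by blast
  have Jid: "\<And>x r. x \<in> J \<Longrightarrow> r * x \<in> J \<and> x * r \<in> J" using idl unfolding alg_ideal_def by blast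
  obtain F where fF: "finite F" and FA: "F \<subseteq> A" and spF: "Q.span F = A"
    using Afd unfolding fin_dim_def by blast
  have Asp: "Q.subspace A" and Am: "\<And>x y. x \<in> A \<Longrightarrow> y \<in> A \<Longrightarrow> x * y \<in> A"
    using Asub unfolding subalgebra_def by auto
  define D where "D = (\<lambda>(b1,b2). lf b1 * lf b2 - lf (b1 * b2)) ` (F \<times> F)"
  define G where "G = D \<union> (\<lambda>(b,d). lf b * d) ` (F \<times> D)"
  have fG: "finite G" unfolding G_def D_def using fF by auto
  have DJ: "D \<subseteq> J" unfolding D_def by (auto simp: inJ Lp.diff pm pl)
  have GJ: "G \<subseteq> J" unfolding G_def using DJ Jid by auto
  obtain f where ff: "f * f = f" and fR: "f \<in> rid sR G" and fg: "\<forall>g\<in>G. f * g = g"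
    using rid_idem[OF reg fG] by blast
  have fJ: "f \<in> J" using rid_sub[OF KR idl GJ fR] .
  have pf: "\<pi> f = 0" using fJ inJ by blast
  have funit: "\<And>y. y \<in> rid sR G \<Longrightarrow> f * y = y" using rid_unit[OF KR fg] by blast
  have L1: "lf a * d \<in> rid sR G" if "a \<in> A" "d \<in> D" for a d
  proof -
    have "Q.span F \<subseteq> {a. lf a * d \<in> rid sR G}"
    proof (rule Q.span_minimal)
      show "F \<subseteq> {a. lf a * d \<in> rid sR G}" using that(2) by (auto simp: G_def intro: rid.gen)
      show "Q.subspace {a. lf a * d \<in> rid sR G}"
        by (rule Q.subspaceI) (auto simp: Ll.zero Ll.add Ll.scale distrib_right sl intro: rid.intros)
    qed
    then show ?thesis using that(1) spF by blast
  qed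
  have L2: "lf b * y \<in> rid sR G" if "b \<in> F" "y \<in> rid sR G" for b y
  proof (rule rid_left[OF KR _ that(2)])
    show "\<forall>g\<in>G. lf b * g \<in> rid sR G"
    proof
      fix g assume "g \<in> G"
      then consider "g \<in> D" | b' d where "b' \<in> F" "d \<in> D" "g = lf b' * d" unfolding G_def by fastforce
      then show "lf b * g \<in> rid sR G"
      proof cases
        case 1 then show ?thesis using that(1) by (auto simp: G_def intro!: rid.gen)
      next
        case 2
        define d0 where "d0 = lf b * lf b' - lf (b * b')"
        have d0D: "d0 \<in> D" unfolding d0_def D_def using that(1) 2 by auto
        have "lf b * g = lf (b * b') * d + d0 * d"
          unfolding 2 d0_def by (simp add: algebra_simps)
        moreover have "lf (b * b') * d \<in> rid sR G" using L1 Am FA that(1) 2 by blast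
        moreover have "d0 * d \<in> rid sR G" using d0D by (auto simp: G_def intro!: rid.gen rid.mult)
        ultimately show ?thesis by (simp add: rid.add)
      qed
    qed
  qed
  have L4: "lf a * f = f * lf a * f" if "a \<in> A" for a
  proof -
    have "Q.span F \<subseteq> {a. lf a * f = f * lf a * f}"
    proof (rule Q.span_minimal)
      show "F \<subseteq> {a. lf a * f = f * lf a * f}"
        using L2[OF _ fR] funit by (auto simp: mult.assoc)
      show "Q.subspace {a. lf a * f = f * lf a * f}"
        by (rule Q.subspaceI) (auto simp: Ll.zero Ll.add Ll.scale distrib_right distrib_left sl sr)
    qed
    then show ?thesis using that spF by blast
  qed
  have L5: "lf a1 * lf a2 - lf (a1 * a2) \<in> rid sR G" if "a1 \<in> A" "a2 \<in> A" for a1 a2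
  proof -
    have step1: "lf a1 * lf b - lf (a1 * b) \<in> rid sR G" if "a1 \<in> A" "b \<in> F" for a1 b
    proof -
      have "Q.span F \<subseteq> {a. lf a * lf b - lf (a * b) \<in> rid sR G}"
      proof (rule Q.span_minimal)
        show "F \<subseteq> {a. lf a * lf b - lf (a * b) \<in> rid sR G}"
          using that(2) by (auto simp: G_def D_def intro!: rid.gen)
        show "Q.subspace {a. lf a * lf b - lf (a * b) \<in> rid sR G}"
        proof (rule Q.subspaceI)
          show "0 \<in> {a. lf a * lf b - lf (a * b) \<in> rid sR G}" by (simp add: Ll.zero rid.zero)
        next
          fix x y assume "x \<in> {a. lf a * lf b - lf (a * b) \<in> rid sR G}" "y \<in> {a. lf a * lf b - lf (a * b) \<in> rid sR G}"
          then have "(lf x * lf b - lf (x * b)) + (lf y * lf b - lf (y * b)) \<in> rid sR G" by (auto intro: rid.add)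
          then show "x + y \<in> {a. lf a * lf b - lf (a * b) \<in> rid sR G}"
            by (simp add: Ll.add distrib_right algebra_simps)
        next
          fix c x assume "x \<in> {a. lf a * lf b - lf (a * b) \<in> rid sR G}"
          then have "sR c (lf x * lf b - lf (x * b)) \<in> rid sR G" by (auto intro: rid.scl)
          then show "sQ c x \<in> {a. lf a * lf b - lf (a * b) \<in> rid sR G}"
            by (simp add: Ll.scale sql sl R.scale_right_diff_distrib)
        qed
      qed
      then show ?thesis using that(1) spF by blast
    qed
    have "Q.span F \<subseteq> {a. lf a1 * lf a - lf (a1 * a) \<in> rid sR G}"
    proof (rule Q.span_minimal)
      show "F \<subseteq> {a. lf a1 * lf a - lf (a1 * a) \<in> rid sR G}"
        using step1 that(1) by auto
      show "Q.subspace {a. lf a1 * lf a - lf (a1 * a) \<in> rid sR G}"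
      proof (rule Q.subspaceI)
        show "0 \<in> {a. lf a1 * lf a - lf (a1 * a) \<in> rid sR G}" by (simp add: Ll.zero rid.zero)
      next
        fix x y assume "x \<in> {a. lf a1 * lf a - lf (a1 * a) \<in> rid sR G}" "y \<in> {a. lf a1 * lf a - lf (a1 * a) \<in> rid sR G}"
        then have "(lf a1 * lf x - lf (a1 * x)) + (lf a1 * lf y - lf (a1 * y)) \<in> rid sR G" by (auto intro: rid.add)
        then show "x + y \<in> {a. lf a1 * lf a - lf (a1 * a) \<in> rid sR G}"
          by (simp add: Ll.add distrib_left algebra_simps)
      next
        fix c x assume "x \<in> {a. lf a1 * lf a - lf (a1 * a) \<in> rid sR G}"
        then have "sR c (lf a1 * lf x - lf (a1 * x)) \<in> rid sR G" by (auto intro: rid.scl)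
        then show "sQ c x \<in> {a. lf a1 * lf a - lf (a1 * a) \<in> rid sR G}"
          by (simp add: Ll.scale sqr sr R.scale_right_diff_distrib)
      qed
    qed
    then show ?thesis using that(2) spF by blast
  qed
  define g where "g a = lf a - f * lf a" for a
  have pg: "\<pi> (g a) = a" for a by (simp add: g_def Lp.diff pm pf pl)
  have ling: "Vector_Spaces.linear sQ sR g"
    unfolding Vector_Spaces.linear_iff
    by (auto simp: g_def Ll.add Ll.scale sr distrib_left R.scale_right_diff_distrib
         Q.vector_space_axioms R.vector_space_axioms)
  interpret Lg: Vector_Spaces.linear sQ sR g by (rule ling)
  define T where "T = g ` A"
  have Tsp: "T = R.span (g ` F)" unfolding T_def using Lg.span_image spF by simp
  have gm: "g a1 * g a2 = g (a1 * a2)" if "a1 \<in> A" "a2 \<in> A" for a1 a2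
  proof -
    define x where "x = lf a1"
    define y where "y = lf a2"
    define e where "e = x * y - lf (a1 * a2)"
    have xf: "x * f = f * x * f" unfolding x_def using L4 that(1) by blast
    have eR: "e \<in> rid sR G" unfolding e_def x_def y_def using L5 that by blast
    have fe: "f * e = e" using funit eR by blast
    have "g a1 * g a2 = (x - f * x) * (y - f * y)" unfolding g_def x_def y_def ..
    also have "\<dots> = x * y - x * f * y - f * x * y + f * x * f * y" by (simp add: algebra_simps)
    also have "\<dots> = x * y - f * x * y" using xf by (simp add: mult.assoc)
    also have "\<dots> = (lf (a1 * a2) + e) - f * (lf (a1 * a2) + e)" unfolding e_def by (simp add: mult.assoc)
    also have "\<dots> = g (a1 * a2)" unfolding g_def using fe by (simp add: distrib_left)
    finally show ?thesis .
  qed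
  have "subalgebra sR T"
    unfolding subalgebra_def
  proof
    show "R.subspace T" unfolding Tsp by simp
    show "\<forall>x\<in>T. \<forall>y\<in>T. x * y \<in> T" unfolding T_def using gm Am by auto
  qed
  moreover have "fin_dim sR T" unfolding fin_dim_def
    by (rule exI[of _ "g ` F"]) (use fF Tsp R.span_superset in auto)
  moreover have "bij_betw \<pi> T A"
    unfolding bij_betw_def inj_on_def T_def by (auto simp: pg image_image)
  ultimately show ?thesis by blast
qed

theorem lemma3p2:
  fixes sR :: "'k::field \<Rightarrow> 'r::ring \<Rightarrow> 'r"
    and sQ :: "'k \<Rightarrow> 'q::ring \<Rightarrow> 'q"
    and \<pi> :: "'r \<Rightarrow> 'q"
    and J :: "'r set"
  assumes "K_algebra sR" and "K_algebra sQ"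
    and "vn_regular TYPE('r)"
    and "alg_ideal sR J"
    and "alg_hom sR sQ \<pi>" and "surj \<pi>" and "{x. \<pi> x = 0} = J"
  shows "(\<forall>A. subalgebra sQ A \<and> fin_dim sQ A \<longrightarrow>
            (\<exists>T. subalgebra sR T \<and> fin_dim sR T \<and> bij_betw \<pi> T A))
       \<and> (fin_dim sQ (UNIV :: 'q set) \<longrightarrow>
            (\<exists>T. subalgebra sR T \<and> T \<inter> J = {0} \<and>
                 (\<forall>x. \<exists>t\<in>T. \<exists>j\<in>J. x = t + j)))"
proof
  show P1: "\<forall>A. subalgebra sQ A \<and> fin_dim sQ A \<longrightarrow>
            (\<exists>T. subalgebra sR T \<and> fin_dim sR T \<and> bij_betw \<pi> T A)"
    using part1[OF assms] by blast
  show "fin_dim sQ (UNIV :: 'q set) \<longrightarrow>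
            (\<exists>T. subalgebra sR T \<and> T \<inter> J = {0} \<and>
                 (\<forall>x. \<exists>t\<in>T. \<exists>j\<in>J. x = t + j))"
  proof
    assume fd: "fin_dim sQ (UNIV :: 'q set)"
    interpret R: vector_space sR using assms(1) unfolding K_algebra_def by blast
    interpret Q: vector_space sQ using assms(2) unfolding K_algebra_def by blast
    interpret Lp: Vector_Spaces.linear sR sQ \<pi> using assms(5) unfolding alg_hom_def by blast
    have "subalgebra sQ (UNIV :: 'q set)" unfolding subalgebra_def by simp
    then obtain T where sT: "subalgebra sR T" and bT: "bij_betw \<pi> T UNIV" using P1 fd by blast
    have T0: "0 \<in> T" using sT unfolding subalgebra_def using R.subspace_0 by blast
    have inj: "inj_on \<pi> T" using bT bij_betw_def by blast
    have "T \<inter> J = {0}"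
    proof
      show "T \<inter> J \<subseteq> {0}"
      proof
        fix t assume "t \<in> T \<inter> J"
        then have "\<pi> t = \<pi> 0" "t \<in> T" using assms(7) Lp.zero by auto
        then show "t \<in> {0}" using inj T0 unfolding inj_on_def by blast
      qed
      show "{0} \<subseteq> T \<inter> J" using T0 assms(7) Lp.zero by auto
    qed
    moreover have "\<forall>x. \<exists>t\<in>T. \<exists>j\<in>J. x = t + j"
    proof
      fix x
      obtain t where "t \<in> T" "\<pi> t = \<pi> x" using bT unfolding bij_betw_def by (metis UNIV_I imageE)
      moreover have "x - t \<in> J" using assms(7) calculation Lp.diff by auto
      ultimately show "\<exists>t\<in>T. \<exists>j\<in>J. x = t + j" by (metis add.commute diff_add_cancel)
    qed
    ultimately show "\<exists>T. subalgebra sR T \<and> T \<inter> J = {0} \<and> (\<forall>x. \<exists>t\<in>T. \<exists>j\<in>J. x = t + j)"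
      using sT by blast
  qed
qed

end
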